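(* Let $\mathcal{B}$ be a homothecy invariant density basis consisting of rectangular parallelepipeds in $\mathbb{R}^n$ and let $\alpha\in(0,1)$. Then for all $\delta\in(0,1-\alpha)$, \[ C_{\mathcal{B}}(\alpha)\le C_{\mathcal{B}}\Big(\alpha\big(1+\tfrac{\delta}{2^n}\big)\Big)\,C_{\mathcal{B}}(1-\delta). \]
   Context: A basis $\mathcal B$ is a collection of bounded open sets in $\mathbb R^n$; it is homothecy invariant if every translate and every positive dilate of a member of $\mathcal B$ belongs to $\mathcal B$. For locally integrable $f$, $M_{\mathcal B}f(x)=\sup_{x\in R\in\mathcal B}\frac{1}{|R|}\int_R|f|$ if $x\in\bigcup_{B\in\mathcal B}B$ and $0$ otherwise. $\mathcal B$ is a density basis if for every $f\in L^\infty(\mathbb R^n)$, for a.e. $x$, $\frac{1}{|R|}\int_R f\to f(x)$ as $R$ ranges over members of $\mathcal B$ containing $x$ with diameter tending to $0$. The halo set is $\mathcal H_{\mathcal B,\beta}(E)=\{x: M_{\mathcal B}\chi_E(x)>\beta\}$, and the sharp Tauberian constant is $C_{\mathcal B}(\beta)=\sup_{E:\,0<|E|<\infty}\frac{|\mathcal H_{\mathcal B,\beta}(E)|}{|E|}$ for $\beta\in(0,1)$. *)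

theory Defs
  imports "HOL-Analysis.Analysis"
begin

definition rect_parallelepiped :: "'a::euclidean_space set \<Rightarrow> bool" where
  "rect_parallelepiped R \<longleftrightarrow>
     (\<exists>(u::'a \<Rightarrow> 'a) a b. (\<forall>i\<in>Basis. \<forall>j\<in>Basis. u i \<bullet> u j = (if i = j then 1 else 0))
            \<and> (\<forall>i\<in>Basis. a i < (b i :: real))
            \<and> R = {x. \<forall>i\<in>Basis. a i < x \<bullet> u i \<and> x \<bullet> u i < b i})"

definition is_basis :: "'a::euclidean_space set set \<Rightarrow> bool" where
  "is_basis \<B> \<longleftrightarrow> (\<forall>R\<in>\<B>. bounded R \<and> open R)"

definition homothecy_invariant :: "'a::euclidean_space set set \<Rightarrow> bool" where
  "homothecy_invariant \<B> \<longleftrightarrow>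
     (\<forall>R\<in>\<B>. \<forall>t. \<forall>r::real. r > 0 \<longrightarrow> ((\<lambda>x. t + r *\<^sub>R x) ` R) \<in> \<B>)"

definition max_op :: "'a::euclidean_space set set \<Rightarrow> ('a \<Rightarrow> real) \<Rightarrow> 'a \<Rightarrow> ennreal" where
  "max_op \<B> f x =
     (if x \<in> \<Union>\<B>
      then (SUP R\<in>{R\<in>\<B>. x \<in> R}.
              (\<integral>\<^sup>+ y. ennreal \<bar>f y\<bar> * indicator R y \<partial>lebesgue) / emeasure lebesgue R)
      else 0)"

definition density_basis :: "'a::euclidean_space set set \<Rightarrow> bool" where
  "density_basis \<B> \<longleftrightarrow>
     (\<forall>f::'a \<Rightarrow> real. f \<in> borel_measurable lebesgue \<and>
        (\<exists>C. AE x in lebesgue. \<bar>f x\<bar> \<le> C) \<longrightarrow>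
        (AE x in lebesgue. \<forall>e>0. \<exists>d>0. \<forall>R\<in>\<B>. x \<in> R \<and> diameter R < d \<longrightarrow>
            \<bar>(\<integral>y. indicator R y * f y \<partial>lebesgue) / measure lebesgue R - f x\<bar> < e))"

definition halo :: "'a::euclidean_space set set \<Rightarrow> real \<Rightarrow> 'a set \<Rightarrow> 'a set" where
  "halo \<B> \<beta> E = {x. max_op \<B> (indicator E) x > ennreal \<beta>}"

definition tauberian_const :: "'a::euclidean_space set set \<Rightarrow> real \<Rightarrow> ennreal" where
  "tauberian_const \<B> \<beta> =
     (SUP E\<in>{E\<in>sets lebesgue. 0 < emeasure lebesgue E \<and> emeasure lebesgue E < \<infinity>}.
        emeasure lebesgue (halo \<B> \<beta> E) / emeasure lebesgue E)"

end

theory Submission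
  imports Defs
begin



lemma basis_sets: "is_basis B \<Longrightarrow> R \<in> B \<Longrightarrow> R \<in> sets lebesgue"
  unfolding is_basis_def using borel_open sets_completionI_sets sets_lborel by blast

lemma basis_fin: "is_basis B \<Longrightarrow> R \<in> B \<Longrightarrow> emeasure lebesgue R \<noteq> \<infinity>"
proof -
  assume "is_basis B" "R \<in> B"
  then have "R \<in> fmeasurable lebesgue"
    using basis_sets bounded_set_imp_lmeasurable unfolding is_basis_def by blast
  then have "emeasure lebesgue R < \<infinity>" unfolding fmeasurable_def by blast
  then show ?thesis by simp
qed

lemma ratio_gt:
  assumes R: "R \<in> sets lebesgue" "emeasure lebesgue R \<noteq> \<infinity>" and E: "E \<in> sets lebesgue"
    and beta: "\<beta> \<ge> 0"
  shows "(ennreal \<beta> < emeasure lebesgue (E \<inter> R) / emeasure lebesgue R)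
     \<longleftrightarrow> \<beta> * measure lebesgue R < measure lebesgue (E \<inter> R)"
proof -
  have fin2: "emeasure lebesgue (E \<inter> R) \<noteq> \<infinity>"
    using R E by (metis emeasure_mono inf_le2 infinity_ennreal_def neq_top_trans)
  have e1: "emeasure lebesgue R = ennreal (measure lebesgue R)"
    using R by (simp add: emeasure_eq_ennreal_measure)
  have e2: "emeasure lebesgue (E \<inter> R) = ennreal (measure lebesgue (E \<inter> R))"
    using fin2 by (simp add: emeasure_eq_ennreal_measure)
  have le: "measure lebesgue (E \<inter> R) \<le> measure lebesgue R"
    using R E by (intro measure_mono_fmeasurable) (auto simp: fmeasurable_def less_top)
  show ?thesis
  proof (cases "measure lebesgue R = 0")
    case True
    then have "measure lebesgue (E \<inter> R) = 0" using le by (simp add: antisym)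
    then show ?thesis using True e1 e2 by simp
  next
    case False
    then have pos: "measure lebesgue R > 0" by (simp add: order_less_le)
    have "emeasure lebesgue (E \<inter> R) / emeasure lebesgue R
       = ennreal (measure lebesgue (E \<inter> R) / measure lebesgue R)"
      using pos by (simp add: e1 e2 divide_ennreal)
    then show ?thesis using pos beta
      by (simp add: ennreal_less_iff divide_nonneg_pos pos_less_divide_eq mult.commute)
  qed
qed

lemma halo_iff:
  assumes B: "is_basis B" and E: "E \<in> sets lebesgue" and beta: "\<beta> \<ge> 0"
  shows "x \<in> halo B \<beta> E \<longleftrightarrow> (\<exists>R\<in>B. x \<in> R \<and> \<beta> * measure lebesgue R < measure lebesgue (E \<inter> R))"
proof -
  have int: "(\<integral>\<^sup>+ y. ennreal \<bar>indicator E y\<bar> * indicator R y \<partial>lebesgue) = emeasure lebesgue (E \<inter> R)"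
    if "R \<in> B" for R
  proof -
    have "(\<integral>\<^sup>+ y. ennreal \<bar>indicator E y\<bar> * indicator R y \<partial>lebesgue)
        = (\<integral>\<^sup>+ y. indicator (E \<inter> R) y \<partial>lebesgue)"
      by (intro nn_integral_cong) (auto simp: indicator_def)
    also have "\<dots> = emeasure lebesgue (E \<inter> R)"
      using basis_sets[OF B that] E by (intro nn_integral_indicator) auto
    finally show ?thesis .
  qed
  show ?thesis
  proof (cases "x \<in> \<Union>B")
    case True
    have eqS: "(SUP R\<in>{R\<in>B. x \<in> R}. (\<integral>\<^sup>+ y. ennreal \<bar>indicator E y\<bar> * indicator R y \<partial>lebesgue) / emeasure lebesgue R)
      = (SUP R\<in>{R\<in>B. x \<in> R}. emeasure lebesgue (E \<inter> R) / emeasure lebesgue R)"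
      by (rule SUP_cong[OF refl], subst int) auto
    have "x \<in> halo B \<beta> E \<longleftrightarrow> (\<exists>R\<in>{R\<in>B. x \<in> R}. ennreal \<beta> < emeasure lebesgue (E \<inter> R) / emeasure lebesgue R)"
      unfolding halo_def max_op_def using True by (simp only: if_True eqS less_SUP_iff mem_Collect_eq)
    also have "\<dots> \<longleftrightarrow> (\<exists>R\<in>B. x \<in> R \<and> \<beta> * measure lebesgue R < measure lebesgue (E \<inter> R))"
      using ratio_gt[OF basis_sets[OF B] basis_fin[OF B] E beta] by auto
    finally show ?thesis .
  next
    case False
    then show ?thesis unfolding halo_def max_op_def by auto
  qed
qed

lemma halo_open: "is_basis B \<Longrightarrow> E \<in> sets lebesgue \<Longrightarrow> \<beta> \<ge> 0 \<Longrightarrow> open (halo B \<beta> E)"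
proof -
  assume B: "is_basis B" and E: "E \<in> sets lebesgue" and b: "\<beta> \<ge> 0"
  have "halo B \<beta> E = \<Union>{R\<in>B. \<beta> * measure lebesgue R < measure lebesgue (E \<inter> R)}"
    using halo_iff[OF B E b] by auto
  then show ?thesis using B unfolding is_basis_def by auto
qed

lemma halo_sets: "is_basis B \<Longrightarrow> E \<in> sets lebesgue \<Longrightarrow> \<beta> \<ge> 0 \<Longrightarrow> halo B \<beta> E \<in> sets lebesgue"
  using halo_open borel_open sets_completionI_sets sets_lborel by blast




locale bctx =
  fixes B :: "'a::euclidean_space set set" and u :: "'a \<Rightarrow> 'a" and a b :: "'a \<Rightarrow> real"
  assumes ortho: "\<forall>i\<in>Basis. \<forall>j\<in>Basis. u i \<bullet> u j = (if i = j then 1 else 0)"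
    and ab: "\<forall>i\<in>Basis. a i < b i"
    and isb: "is_basis B" and hom: "homothecy_invariant B"
    and RB: "{x. \<forall>i\<in>Basis. a i < x \<bullet> u i \<and> x \<bullet> u i < b i} \<in> B"
begin

definition tau :: "'a \<Rightarrow> 'a \<Rightarrow> real" where
  "tau x i = (x \<bullet> u i - a i) / (b i - a i)"

definition Box :: "('a \<Rightarrow> real) \<Rightarrow> real \<Rightarrow> 'a set" where
  "Box p s = {x. \<forall>i\<in>Basis. p i < tau x i \<and> tau x i < p i + s}"

definition tr :: "('a \<Rightarrow> real) \<Rightarrow> real \<Rightarrow> 'a" where
  "tr p s = (\<Sum>i\<in>Basis. (a i * (1 - s) + p i * (b i - a i)) *\<^sub>R u i)"

lemma tr_inner: "j \<in> Basis \<Longrightarrow> tr p s \<bullet> u j = a j * (1 - s) + p j * (b j - a j)"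
proof -
  assume j: "j \<in> Basis"
  have "tr p s \<bullet> u j = (\<Sum>i\<in>Basis. (a i * (1 - s) + p i * (b i - a i)) * (u i \<bullet> u j))"
    by (simp add: tr_def inner_sum_left)
  also have "\<dots> = (\<Sum>i\<in>Basis. if i = j then a i * (1 - s) + p i * (b i - a i) else 0)"
    using ortho j by (intro sum.cong) auto
  also have "\<dots> = a j * (1 - s) + p j * (b j - a j)" using j by simp
  finally show ?thesis .
qed

lemma tau_affine: "i \<in> Basis \<Longrightarrow> tau (tr p s + s *\<^sub>R x) i = p i + s * tau x i"
proof -
  assume i: "i \<in> Basis"
  then have d: "b i - a i \<noteq> 0" using ab by force
  have "(tr p s + s *\<^sub>R x) \<bullet> u i - a i = p i * (b i - a i) + s * (x \<bullet> u i - a i)"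
    using tr_inner[OF i, of p s] by (simp add: inner_add_left algebra_simps)
  then show ?thesis using d by (simp add: tau_def add_divide_distrib)
qed

lemma R_eq: "{x. \<forall>i\<in>Basis. a i < x \<bullet> u i \<and> x \<bullet> u i < b i} = Box (\<lambda>_. 0) 1"
  using ab by (auto simp: Box_def tau_def field_simps)

lemma Box_image:
  assumes s: "s > 0"
  shows "Box p s = (\<lambda>x. s *\<^sub>R x + tr p s) ` Box (\<lambda>_. 0) 1"
proof
  show "Box p s \<subseteq> (\<lambda>x. s *\<^sub>R x + tr p s) ` Box (\<lambda>_. 0) 1"
  proof
    fix y assume y: "y \<in> Box p s"
    define x where "x = (1/s) *\<^sub>R (y - tr p s)"
    have yx: "y = tr p s + s *\<^sub>R x" using s by (simp add: x_def)
    have "x \<in> Box (\<lambda>_. 0) 1"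
      using y s unfolding Box_def
      by (auto simp: yx tau_affine zero_less_mult_iff)
    then show "y \<in> (\<lambda>x. s *\<^sub>R x + tr p s) ` Box (\<lambda>_. 0) 1" using yx by (auto simp: add.commute)
  qed
next
  show "(\<lambda>x. s *\<^sub>R x + tr p s) ` Box (\<lambda>_. 0) 1 \<subseteq> Box p s"
    using s by (auto simp: Box_def add.commute[of _ "tr p s"] tau_affine)
qed

lemma R_in_B: "Box (\<lambda>_. 0) 1 \<in> B" using RB R_eq by simp

lemma Box_in_B: "s > 0 \<Longrightarrow> Box p s \<in> B"
proof -
  assume s: "s > 0"
  have "(\<lambda>x. tr p s + s *\<^sub>R x) ` Box (\<lambda>_. 0) 1 \<in> B"
    using hom R_in_B s unfolding homothecy_invariant_def by blast
  then show ?thesis using Box_image[OF s, of p] by (simp add: add.commute)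
qed

lemma Box_open: "s > 0 \<Longrightarrow> open (Box p s)"
  using Box_in_B isb unfolding is_basis_def by blast

lemma Box_bounded: "s > 0 \<Longrightarrow> bounded (Box p s)"
  using Box_in_B isb unfolding is_basis_def by blast

lemma Box_sets: "s > 0 \<Longrightarrow> Box p s \<in> sets lebesgue"
  using Box_open borel_open sets_completionI_sets sets_lborel by blast

lemma Box_fmeas: "s > 0 \<Longrightarrow> Box p s \<in> fmeasurable lebesgue"
  using Box_sets Box_bounded bounded_set_imp_lmeasurable by blast

lemma Box_fin: "s > 0 \<Longrightarrow> emeasure lebesgue (Box p s) \<noteq> \<infinity>"
proof -
  assume "s > 0"
  then have "emeasure lebesgue (Box p s) < \<infinity>" using Box_fmeas[of s p] unfolding fmeasurable_def by blast
  then show ?thesis by simp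
qed

abbreviation "mR \<equiv> measure lebesgue (Box (\<lambda>_. 0) 1)"

lemma measure_Box: "s > 0 \<Longrightarrow> measure lebesgue (Box p s) = s ^ DIM('a) * mR"
  using measure_lebesgue_affine[of s "tr p s" "Box (\<lambda>_. 0) 1"] Box_image[of s p] by simp

lemma mR_pos: "mR > 0"
proof -
  define c where "c = tr (\<lambda>_. 1/2) 0"
  have "c \<in> Box (\<lambda>_. 0) 1"
  proof -
    have h: "\<And>i. i \<in> Basis \<Longrightarrow> tau c i = 1/2"
      using tau_affine[of _ "\<lambda>_. 1/2" 0 0] by (simp add: c_def)
    show ?thesis unfolding Box_def by (simp add: h)
  qed
  then obtain e where e: "e > 0" "ball c e \<subseteq> Box (\<lambda>_. 0) 1"
    using Box_open[of 1] open_contains_ball by force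
  have "0 < measure lborel (ball c e)" using content_ball_pos[OF e(1)] by simp
  also have "measure lborel (ball c e) = measure lebesgue (ball c e)"
    by (simp add: measure_completion)
  also have "\<dots> \<le> mR"
    by (rule measure_mono_fmeasurable) (use e Box_fmeas[of 1] in auto)
  finally show ?thesis .
qed

lemma diam_Box: "s > 0 \<Longrightarrow> diameter (Box p s) \<le> s * diameter (Box (\<lambda>_. 0) 1)"
proof -
  assume s: "s > 0"
  show ?thesis
  proof (rule diameter_le)
    show "Box p s \<noteq> {} \<or> 0 \<le> s * diameter (Box (\<lambda>_. 0) 1)"
      using s diameter_ge_0[OF Box_bounded[of 1]] by auto
    fix x y assume "x \<in> Box p s" "y \<in> Box p s"
    then obtain x' y' where xy: "x' \<in> Box (\<lambda>_. 0) 1" "y' \<in> Box (\<lambda>_. 0) 1"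
      "x = s *\<^sub>R x' + tr p s" "y = s *\<^sub>R y' + tr p s"
      using Box_image[OF s, of p] by auto
    have "norm (x - y) = s * norm (x' - y')"
      using s by (simp add: xy scaleR_diff_right[symmetric])
    also have "\<dots> \<le> s * diameter (Box (\<lambda>_. 0) 1)"
      using s diameter_bounded_bound[OF Box_bounded[of 1] xy(1,2)] by (simp add: dist_norm)
    finally show "norm (x - y) \<le> s * diameter (Box (\<lambda>_. 0) 1)" .
  qed
qed

end

locale hctx = bctx +
  fixes E :: "'a set" and \<delta> :: real
  assumes E: "E \<in> sets lebesgue" and \<delta>: "0 < \<delta>" "\<delta> < 1"
begin

abbreviation "H \<equiv> halo B (1 - \<delta>) E"

lemma H_sets: "H \<in> sets lebesgue"
  using halo_sets[OF isb E] \<delta> by simp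

definition dg :: "('a \<Rightarrow> real) \<Rightarrow> real \<Rightarrow> bool" where
  "dg p s \<longleftrightarrow> (1 - \<delta>) * measure lebesgue (Box p s) < measure lebesgue (E \<inter> Box p s)"

lemma Box_sub_H: "s > 0 \<Longrightarrow> dg p s \<Longrightarrow> Box p s \<subseteq> H"
  using halo_iff[OF isb E, of "1 - \<delta>"] \<delta> Box_in_B unfolding dg_def by auto

definition child :: "('a \<Rightarrow> real) \<Rightarrow> real \<Rightarrow> 'a set \<Rightarrow> ('a \<Rightarrow> real)" where
  "child p s J = (\<lambda>i. p i + (if i \<in> J then s/2 else 0))"

lemma child_sub: "s > 0 \<Longrightarrow> Box (child p s J) (s/2) \<subseteq> Box p s"
proof
  fix x assume s: "s > 0" and x: "x \<in> Box (child p s J) (s/2)"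
  have "p i < tau x i \<and> tau x i < p i + s" if i: "i \<in> Basis" for i
  proof -
    have "child p s J i < tau x i" "tau x i < child p s J i + s/2" using x i unfolding Box_def by auto
    moreover have "p i \<le> child p s J i" "child p s J i + s/2 \<le> p i + s" using s unfolding child_def by auto
    ultimately show ?thesis by linarith
  qed
  then show "x \<in> Box p s" unfolding Box_def by blast
qed

lemma child_disj:
  assumes "J \<subseteq> Basis" "J' \<subseteq> Basis" "J \<noteq> J'"
  shows "Box (child p s J) (s/2) \<inter> Box (child p s J') (s/2) = {}"
proof -
  obtain i where i: "i \<in> Basis" "(i \<in> J \<and> i \<notin> J') \<or> (i \<notin> J \<and> i \<in> J')"
    using assms by blast
  show ?thesis
  proof (rule ccontr)
    assume "Box (child p s J) (s/2) \<inter> Box (child p s J') (s/2) \<noteq> {}"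
    then obtain x where "x \<in> Box (child p s J) (s/2)" "x \<in> Box (child p s J') (s/2)" by blast
    then have "child p s J i < tau x i \<and> tau x i < child p s J i + s/2"
       "child p s J' i < tau x i \<and> tau x i < child p s J' i + s/2"
      using i(1) unfolding Box_def by auto
    then show False using i(2) unfolding child_def by auto
  qed
qed

fun S :: "nat \<Rightarrow> ('a \<Rightarrow> real) \<Rightarrow> real \<Rightarrow> 'a set" where
  "S 0 p s = {}"
| "S (Suc k) p s = (\<Union>J\<in>Pow Basis. if dg (child p s J) (s/2) then Box (child p s J) (s/2)
                      else S k (child p s J) (s/2))"

lemma S_sub: "s > 0 \<Longrightarrow> S k p s \<subseteq> Box p s \<inter> H"
proof (induction k arbitrary: p s)
  case 0 then show ?case by simp
next
  case (Suc k)
  have "(if dg (child p s J) (s/2) then Box (child p s J) (s/2) else S k (child p s J) (s/2))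
     \<subseteq> Box p s \<inter> H" for J
    using Suc.IH[of "s/2" "child p s J"] child_sub[of s p J] Box_sub_H[of "s/2" "child p s J"] Suc.prems
    by auto
  then show ?case by (simp only: S.simps) (intro UN_least; blast)
qed

lemma S_mono: "S k p s \<subseteq> S (Suc k) p s"
proof (induction k arbitrary: p s)
  case 0 then show ?case by simp
next
  case (Suc k)
  have "(if dg (child p s J) (s/2) then Box (child p s J) (s/2) else S k (child p s J) (s/2))
     \<subseteq> (if dg (child p s J) (s/2) then Box (child p s J) (s/2) else S (Suc k) (child p s J) (s/2))" for J
    using Suc.IH[of "child p s J" "s/2"] by simp
  then show ?case
    unfolding S.simps(2)[of "Suc k" p s] S.simps(2)[of k p s] by (rule UN_mono[OF order_refl])

qed

lemma S_incseq: "incseq (\<lambda>k. S k p s)"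
  using S_mono by (simp add: incseq_SucI)

lemma S_sets: "s > 0 \<Longrightarrow> S k p s \<in> sets lebesgue"
proof (induction k arbitrary: p s)
  case 0 then show ?case by simp
next
  case (Suc k)
  have "(if dg (child p s J) (s/2) then Box (child p s J) (s/2) else S k (child p s J) (s/2))
     \<in> sets lebesgue" for J
    using Suc Box_sets[of "s/2"] by auto
  then show ?case by (simp only: S.simps) (intro sets.finite_UN; simp)
qed

fun desc :: "nat \<Rightarrow> ('a \<Rightarrow> real) \<Rightarrow> real \<Rightarrow> (('a \<Rightarrow> real) \<times> real) set" where
  "desc 0 p s = {(p, s)}"
| "desc (Suc k) p s = (\<Union>J\<in>Pow Basis. desc k (child p s J) (s/2))"

lemma desc_prop: "(q, r) \<in> desc k p s \<Longrightarrow> s > 0 \<Longrightarrow> r = s / 2^k \<and> Box q r \<subseteq> Box p s"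
proof (induction k arbitrary: p s)
  case 0 then show ?case by simp
next
  case (Suc k)
  then obtain J where "(q, r) \<in> desc k (child p s J) (s/2)" by auto
  then show ?case using Suc.IH[of "child p s J" "s/2"] Suc.prems child_sub[of s p J]
    by auto
qed

lemma desc_S:
  "(q, r) \<in> desc k p s \<Longrightarrow> s > 0 \<Longrightarrow> x \<in> Box q r \<Longrightarrow> dg q r \<Longrightarrow> \<not> dg p s \<Longrightarrow> x \<in> S k p s"
proof (induction k arbitrary: p s)
  case 0 then show ?case by simp
next
  case (Suc k)
  then obtain J where J: "J \<in> Pow Basis" "(q, r) \<in> desc k (child p s J) (s/2)" by auto
  show ?case
  proof (cases "dg (child p s J) (s/2)")
    case True
    then have "x \<in> Box (child p s J) (s/2)" using desc_prop[OF J(2)] Suc.prems by auto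
    then show ?thesis using True J(1) by auto
  next
    case False
    then have "x \<in> S k (child p s J) (s/2)" using Suc.IH[OF J(2)] Suc.prems by auto
    then show ?thesis using False J(1) by auto
  qed
qed

lemma cover:
  "x \<in> Box p s \<Longrightarrow> s > 0 \<Longrightarrow> s \<in> \<rat> \<Longrightarrow> (\<forall>i\<in>Basis. p i \<in> \<rat>) \<Longrightarrow> (\<forall>i\<in>Basis. tau x i \<notin> \<rat>)
   \<Longrightarrow> \<exists>q r. (q, r) \<in> desc k p s \<and> x \<in> Box q r"
proof (induction k arbitrary: p s)
  case 0 then show ?case by auto
next
  case (Suc k)
  define J where "J = {i\<in>Basis. p i + s/2 < tau x i}"
  have ne: "tau x i \<noteq> p i + s/2" if "i \<in> Basis" for i
    using Suc.prems that by auto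
  have "x \<in> Box (child p s J) (s/2)"
    unfolding Box_def
  proof (intro CollectI ballI)
    fix i :: 'a assume i: "i \<in> Basis"
    have b: "p i < tau x i" "tau x i < p i + s" using Suc.prems(1) i unfolding Box_def by auto
    show "child p s J i < tau x i \<and> tau x i < child p s J i + s / 2"
    proof (cases "i \<in> J")
      case True
      then show ?thesis using b by (auto simp: child_def J_def)
    next
      case False
      then have "tau x i < p i + s/2" using ne[OF i] i by (auto simp: J_def)
      then show ?thesis using b False by (auto simp: child_def)
    qed
  qed
  moreover have "\<forall>i\<in>Basis. child p s J i \<in> \<rat>" "s/2 \<in> \<rat>"
    using Suc.prems unfolding child_def by auto
  ultimately obtain q r where "(q, r) \<in> desc k (child p s J) (s/2)" "x \<in> Box q r"
    using Suc.IH[of "child p s J" "s/2"] Suc.prems by auto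
  moreover have "J \<in> Pow Basis" by (auto simp: J_def)
  ultimately show ?case by auto
qed

end




context hctx begin

definition qv :: "('a \<Rightarrow> real) \<Rightarrow> real \<Rightarrow> 'a set \<Rightarrow> real \<Rightarrow> ('a \<Rightarrow> real)" where
  "qv p s J r = (\<lambda>i. if i \<in> J then p i + s - r * s / 2 else p i)"

lemma Q_mono:
  assumes s: "s > 0" and r: "1 \<le> r" "r \<le> r'"
  shows "Box (qv p s J r) (r * s / 2) \<subseteq> Box (qv p s J r') (r' * s / 2)"
proof
  fix x assume x: "x \<in> Box (qv p s J r) (r * s / 2)"
  have rr: "r * s / 2 \<le> r' * s / 2" using s r by (simp add: mult_right_mono)
  have "qv p s J r' i < tau x i \<and> tau x i < qv p s J r' i + r' * s / 2" if i: "i \<in> Basis" for i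
  proof -
    have "qv p s J r i < tau x i" "tau x i < qv p s J r i + r * s / 2" using x i unfolding Box_def by auto
    then show ?thesis using rr unfolding qv_def by (cases "i \<in> J") auto
  qed
  then show "x \<in> Box (qv p s J r') (r' * s / 2)" unfolding Box_def by blast
qed

lemma Q2: "Box (qv p s J 2) (2 * s / 2) = Box p s"
proof -
  have "qv p s J 2 = p" by (rule ext) (simp add: qv_def)
  then show ?thesis by simp
qed

lemma Q1: "Box (qv p s J 1) (1 * s / 2) = Box (child p s J) (s/2)"
proof -
  have "qv p s J 1 = child p s J" by (rule ext) (simp add: qv_def child_def)
  then show ?thesis by simp
qed

lemma enlarge:
  assumes s: "s > 0" and nd: "\<not> dg p s" and cd: "dg (child p s J) (s/2)"
  shows "\<delta> * (measure lebesgue (Box p s) / 2 ^ DIM('a)) \<le> measure lebesgue (H \<inter> Box p s - E)"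
proof -
  let ?n = "DIM('a)"
  define Q where "Q r = Box (qv p s J r) (r * s / 2)" for r
  define h where "h r = (r * s / 2) ^ ?n * mR" for r
  define g where "g r = measure lebesgue (E \<inter> Q r)" for r
  define f where "f r = g r - (1 - \<delta>) * h r" for r
  have pos: "r * s / 2 > 0" if "1 \<le> r" for r using that s by simp
  have mQ: "measure lebesgue (Q r) = h r" if "1 \<le> r" for r
    unfolding Q_def h_def using measure_Box[OF pos[OF that]] by simp
  have Qf: "Q r \<in> fmeasurable lebesgue" if "1 \<le> r" for r
    unfolding Q_def using Box_fmeas[OF pos[OF that]] .
  have EQf: "E \<inter> Q r \<in> fmeasurable lebesgue" if "1 \<le> r" for r
    using fmeasurable_Int_fmeasurable[OF Qf[OF that] E] by (simp add: Int_commute)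
  have gdiff: "g r \<le> g r' \<and> g r' \<le> g r + (h r' - h r)" if "1 \<le> r" "r \<le> r'" for r r'
  proof -
    have sub: "Q r \<subseteq> Q r'" unfolding Q_def using Q_mono[OF s that] .
    have r': "1 \<le> r'" using that by simp
    have "g r \<le> g r'" unfolding g_def
      by (rule measure_mono_fmeasurable) (use sub EQf[OF r'] fmeasurableD[OF EQf[OF that(1)]] in auto)
    moreover have "g r' \<le> measure lebesgue ((E \<inter> Q r) \<union> (Q r' - Q r))"
      unfolding g_def
      by (rule measure_mono_fmeasurable)
         (use fmeasurableD[OF EQf[OF r']] EQf[OF that(1)] Qf[OF r'] Qf[OF that(1)] in auto)
    moreover have "measure lebesgue ((E \<inter> Q r) \<union> (Q r' - Q r)) \<le> g r + measure lebesgue (Q r' - Q r)"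
      unfolding g_def
      by (rule measure_Un_le) (use fmeasurableD[OF EQf[OF that(1)]] fmeasurableD[OF Qf[OF r']] fmeasurableD[OF Qf[OF that(1)]] in auto)
    moreover have "measure lebesgue (Q r' - Q r) = h r' - h r"
      using measure_Diff[of lebesgue "Q r'" "Q r"] sub Qf[OF r'] Qf[OF that(1)] mQ[OF r'] mQ[OF that(1)]
      by (auto simp: fmeasurable_def)
    ultimately show ?thesis by linarith
  qed
  have hcont: "continuous_on {1..2} h" unfolding h_def by (intro continuous_intros) auto
  have gcont: "continuous_on {1..2} g"
    unfolding continuous_on_iff
  proof (intro ballI allI impI)
    fix x e :: real assume x: "x \<in> {1..2}" and e: "e > 0"
    obtain d where d: "d > 0" "\<forall>x'\<in>{1..2}. dist x' x < d \<longrightarrow> dist (h x') (h x) < e"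
      using hcont x e unfolding continuous_on_iff by blast
    show "\<exists>d>0. \<forall>x'\<in>{1..2}. dist x' x < d \<longrightarrow> dist (g x') (g x) < e"
    proof (intro exI[of _ d] conjI ballI impI)
      fix x' assume x': "x' \<in> {1..2}" "dist x' x < d"
      have "dist (g x') (g x) \<le> dist (h x') (h x)"
      proof (cases "x \<le> x'")
        case True then show ?thesis using gdiff[of x x'] x by (auto simp: dist_real_def)
      next
        case False then show ?thesis using gdiff[of x' x] x' by (auto simp: dist_real_def)
      qed
      then show "dist (g x') (g x) < e" using d x' by fastforce
    qed (use d in auto)
  qed
  have fcont: "continuous_on {1..2} f" unfolding f_def by (intro continuous_intros gcont hcont)
  define Z where "Z = {r \<in> {1..2}. f r \<le> (\<lambda>_. 0) r}"
  have Zc: "closed Z" unfolding Z_def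
    by (rule continuous_on_closed_Collect_le[OF fcont]) (auto intro: continuous_intros)
  have "Q 2 = Box p s" unfolding Q_def using Q2 by simp
  then have "f 2 \<le> 0" using nd mQ[of 2] unfolding f_def g_def dg_def by simp
  then have "2 \<in> Z" unfolding Z_def by simp
  define rs where "rs = Inf Z"
  have bdd: "bdd_below Z" unfolding Z_def by (rule bdd_belowI[of _ 1]) auto
  have rsZ: "rs \<in> Z" unfolding rs_def using closed_contains_Inf[OF _ bdd Zc] \<open>2 \<in> Z\<close> by blast
  have "Q 1 = Box (child p s J) (s/2)" unfolding Q_def using Q1 by simp
  then have "f 1 > 0" using cd mQ[of 1] unfolding f_def g_def dg_def by simp
  then have rs1: "rs > 1" using rsZ unfolding Z_def by (cases "rs = 1") auto
  have rs2: "rs \<le> 2" using rsZ unfolding Z_def by auto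
  have below: "h r \<le> measure lebesgue (H \<inter> Q rs)" if r: "r \<in> {1<..<rs}" for r
  proof -
    have "r \<notin> Z" using r cInf_lower[OF _ bdd, of r] unfolding rs_def by force
    then have "f r > 0" using r rs2 unfolding Z_def by auto
    then have "dg (qv p s J r) (r * s / 2)" using mQ[of r] r unfolding f_def g_def dg_def Q_def by simp
    then have "Q r \<subseteq> H" unfolding Q_def using Box_sub_H pos[of r] r by auto
    moreover have "Q r \<subseteq> Q rs" unfolding Q_def using Q_mono[OF s, of r rs] r by auto
    ultimately have "Q r \<subseteq> H \<inter> Q rs" by auto
    then have "measure lebesgue (Q r) \<le> measure lebesgue (H \<inter> Q rs)"
      by (intro measure_mono_fmeasurable)
         (use fmeasurable_Int_fmeasurable[OF Qf[of rs] H_sets] rs1 fmeasurableD[OF Qf[of r]] r in \<open>auto simp: Int_commute\<close>)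
    then show ?thesis using mQ[of r] r by simp
  qed
  have lim: "(h \<longlongrightarrow> h rs) (at_left rs)" unfolding h_def by (intro tendsto_intros) auto
  have hrs: "h rs \<le> measure lebesgue (H \<inter> Q rs)"
    by (rule tendsto_upperbound[OF lim _ trivial_limit_at_left_real])
       (use eventually_at_left_real[OF rs1] below in \<open>auto elim!: eventually_mono\<close>)
  have grs: "g rs \<le> (1 - \<delta>) * h rs" using rsZ unfolding Z_def f_def by simp
  have HQf: "H \<inter> Q rs \<in> fmeasurable lebesgue"
    using fmeasurable_Int_fmeasurable[OF Qf[of rs] H_sets] rs1 by (simp add: Int_commute)
  have "measure lebesgue (H \<inter> Q rs - E) = measure lebesgue (H \<inter> Q rs) - measure lebesgue (H \<inter> Q rs \<inter> E)"
  proof -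
    have "measure lebesgue (H \<inter> Q rs - H \<inter> Q rs \<inter> E) = measure lebesgue (H \<inter> Q rs) - measure lebesgue (H \<inter> Q rs \<inter> E)"
      by (rule measure_Diff) (use fmeasurableD2[OF HQf] fmeasurableD[OF HQf] E in auto)
    moreover have "H \<inter> Q rs - H \<inter> Q rs \<inter> E = H \<inter> Q rs - E" by auto
    ultimately show ?thesis by simp
  qed
  moreover have "measure lebesgue (H \<inter> Q rs \<inter> E) \<le> g rs" unfolding g_def
    by (rule measure_mono_fmeasurable) (use EQf[of rs] rs1 fmeasurableD[OF HQf] E in auto)
  ultimately have m1: "\<delta> * h rs \<le> measure lebesgue (H \<inter> Q rs - E)"
    using hrs grs by (simp add: algebra_simps)
  have "h 1 \<le> h rs" unfolding h_def using rs1 s mR_pos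
    by (intro mult_right_mono power_mono) auto
  moreover have "h 1 = measure lebesgue (Box p s) / 2 ^ ?n"
    unfolding h_def using measure_Box[OF s, of p] by (simp add: power_divide)
  moreover have "measure lebesgue (H \<inter> Q rs - E) \<le> measure lebesgue (H \<inter> Box p s - E)"
  proof (rule measure_mono_fmeasurable)
    show "H \<inter> Q rs - E \<subseteq> H \<inter> Box p s - E"
      using Q_mono[OF s, of rs 2] rs1 rs2 Q2 unfolding Q_def by auto
    show "H \<inter> Q rs - E \<in> sets lebesgue" using HQf E by auto
    show "H \<inter> Box p s - E \<in> fmeasurable lebesgue"
      using fmeasurable_Int_fmeasurable[OF Box_fmeas[OF s] H_sets] E
      by (metis Diff_subset Int_commute fmeasurableI2 sets.Diff fmeasurableD sets.Int H_sets)
  qed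
  ultimately show ?thesis using m1 \<delta>(1)
    by (smt (verit) mult_left_mono)
qed

end



context hctx begin

lemma HBf: "s > 0 \<Longrightarrow> H \<inter> Box p s \<in> fmeasurable lebesgue"
  using fmeasurable_Int_fmeasurable[OF Box_fmeas H_sets] by (simp add: Int_commute)

lemma stopping:
  "s > 0 \<Longrightarrow> \<not> dg p s \<Longrightarrow>
    (1 + \<delta> / 2 ^ DIM('a)) * measure lebesgue (E \<inter> S k p s) \<le> measure lebesgue (H \<inter> Box p s)"
proof (induction k arbitrary: p s)
  case 0 then show ?case by simp
next
  case (Suc k)
  let ?c = "\<delta> / 2 ^ DIM('a)"
  have c0: "?c \<ge> 0" using \<delta> by simp
  have s: "s > 0" using Suc.prems by simp
  show ?case
  proof (cases "\<exists>J\<in>Pow Basis. dg (child p s J) (s/2)")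
    case True
    then obtain J where J: "dg (child p s J) (s/2)" by blast
    have en: "\<delta> * (measure lebesgue (Box p s) / 2 ^ DIM('a)) \<le> measure lebesgue (H \<inter> Box p s - E)"
      using enlarge[OF s Suc.prems(2) J] .
    have sub: "E \<inter> S (Suc k) p s \<subseteq> H \<inter> Box p s \<inter> E" using S_sub[OF s, of "Suc k" p] by blast
    have HBEf: "H \<inter> Box p s \<inter> E \<in> fmeasurable lebesgue"
      using fmeasurable_Int_fmeasurable[OF HBf[OF s] E] .
    have m1: "measure lebesgue (E \<inter> S (Suc k) p s) \<le> measure lebesgue (H \<inter> Box p s \<inter> E)"
      by (rule measure_mono_fmeasurable[OF sub _ HBEf]) (meson S_sets[OF s, of "Suc k" p] E sets.Int)
    have m2: "measure lebesgue (H \<inter> Box p s \<inter> E) \<le> measure lebesgue (Box p s)"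
      by (rule measure_mono_fmeasurable[OF _ _ Box_fmeas[OF s]]) (use HBEf in auto)
    have "measure lebesgue (H \<inter> Box p s - H \<inter> Box p s \<inter> E)
        = measure lebesgue (H \<inter> Box p s) - measure lebesgue (H \<inter> Box p s \<inter> E)"
      by (rule measure_Diff) (use fmeasurableD2[OF HBf[OF s]] fmeasurableD[OF HBf[OF s]] E in auto)
    moreover have "H \<inter> Box p s - H \<inter> Box p s \<inter> E = H \<inter> Box p s - E" by auto
    ultimately have split: "measure lebesgue (H \<inter> Box p s) = measure lebesgue (H \<inter> Box p s \<inter> E) + measure lebesgue (H \<inter> Box p s - E)"
      by simp
    have "?c * measure lebesgue (E \<inter> S (Suc k) p s) \<le> ?c * measure lebesgue (Box p s)"
      using m1 m2 c0 by (intro mult_left_mono) auto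
    moreover have "?c * measure lebesgue (Box p s) = \<delta> * (measure lebesgue (Box p s) / 2 ^ DIM('a))" by simp
    ultimately show ?thesis using en split m1 by (simp add: algebra_simps)
  next
    case False
    then have eqS: "S (Suc k) p s = (\<Union>J\<in>Pow Basis. S k (child p s J) (s/2))"
      by (simp only: S.simps) (intro SUP_cong refl; auto)
    have s2: "s/2 > 0" using s by simp
    have "measure lebesgue (E \<inter> S (Suc k) p s) = measure lebesgue (\<Union>J\<in>Pow Basis. E \<inter> S k (child p s J) (s/2))"
      unfolding eqS by (simp only: Int_UN_distrib)
    also have "\<dots> \<le> (\<Sum>J\<in>Pow Basis. measure lebesgue (E \<inter> S k (child p s J) (s/2)))"
      by (rule measure_UNION_le) (use S_sets[OF s2] E in \<open>auto intro: sets.Int\<close>)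
    finally have le1: "measure lebesgue (E \<inter> S (Suc k) p s) \<le> (\<Sum>J\<in>Pow Basis. measure lebesgue (E \<inter> S k (child p s J) (s/2)))" .
    have "(1 + ?c) * measure lebesgue (E \<inter> S (Suc k) p s)
        \<le> (1 + ?c) * (\<Sum>J\<in>Pow Basis. measure lebesgue (E \<inter> S k (child p s J) (s/2)))"
      using le1 c0 by (intro mult_left_mono) auto
    also have "\<dots> = (\<Sum>J\<in>Pow Basis. (1 + ?c) * measure lebesgue (E \<inter> S k (child p s J) (s/2)))"
      by (simp add: sum_distrib_left)
    also have "\<dots> \<le> (\<Sum>J\<in>Pow Basis. measure lebesgue (H \<inter> Box (child p s J) (s/2)))"
    proof (rule sum_mono)
      fix J :: "'a set" assume "J \<in> Pow Basis"
      then have "\<not> dg (child p s J) (s/2)" using False by auto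
      then show "(1 + ?c) * measure lebesgue (E \<inter> S k (child p s J) (s/2)) \<le> measure lebesgue (H \<inter> Box (child p s J) (s/2))"
        using Suc.IH[OF s2] by blast
    qed
    also have "\<dots> = measure lebesgue (\<Union>J\<in>Pow Basis. H \<inter> Box (child p s J) (s/2))"
    proof (rule measure_finite_Union[symmetric])
      show "finite (Pow (Basis :: 'a set))" by simp
      show "(\<lambda>J. H \<inter> Box (child p s J) (s/2)) ` Pow Basis \<subseteq> sets lebesgue"
        using HBf[OF s2] by (auto dest: fmeasurableD)
      show "disjoint_family_on (\<lambda>J. H \<inter> Box (child p s J) (s/2)) (Pow Basis)"
        unfolding disjoint_family_on_def using child_disj by blast
      show "emeasure lebesgue (H \<inter> Box (child p s J) (s/2)) \<noteq> \<infinity>" for J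
        using fmeasurableD2[OF HBf[OF s2]] by simp
    qed
    also have "\<dots> \<le> measure lebesgue (H \<inter> Box p s)"
    proof (rule measure_mono_fmeasurable[OF _ _ HBf[OF s]])
      show "(\<Union>J\<in>Pow Basis. H \<inter> Box (child p s J) (s/2)) \<subseteq> H \<inter> Box p s" using child_sub[OF s] by blast
      show "(\<Union>J\<in>Pow Basis. H \<inter> Box (child p s J) (s/2)) \<in> sets lebesgue"
        by (rule sets.finite_UN) (use fmeasurableD[OF HBf[OF s2]] in auto)
    qed
    finally show ?thesis .
  qed
qed

end



context hctx begin

lemma key:
  assumes db: "density_basis B" and nd: "\<not> dg (\<lambda>_. 0) 1"
  shows "(1 + \<delta> / 2 ^ DIM('a)) * measure lebesgue (E \<inter> Box (\<lambda>_. 0) 1)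
           \<le> measure lebesgue (H \<inter> Box (\<lambda>_. 0) 1)"
proof -
  let ?R = "Box (\<lambda>_. 0) 1"
  let ?c = "\<delta> / 2 ^ DIM('a)"
  define N where "N = (\<Union>(i, q)\<in>Basis \<times> \<rat>. {x. u i \<bullet> x = a i + q * (b i - a i)})"
  have Nnull: "N \<in> null_sets lebesgue"
    unfolding N_def
  proof (rule null_sets_UN')
    show "countable (Basis \<times> (\<rat> :: real set))" using countable_rat by (intro countable_SIGMA) (auto intro: countable_finite)
    fix iq :: "'a \<times> real" assume "iq \<in> Basis \<times> \<rat>"
    then obtain i q where iq: "iq = (i, q)" "i \<in> Basis" by auto
    have "u i \<bullet> u i = 1" using ortho iq(2) by auto
    then have "u i \<noteq> 0" by auto
    then have "negligible {x. u i \<bullet> x = a i + q * (b i - a i)}"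
      by (intro negligible_hyperplane) auto
    then show "(case iq of (i, q) \<Rightarrow> {x. u i \<bullet> x = a i + q * (b i - a i)}) \<in> null_sets lebesgue"
      using iq(1) negligible_iff_null_sets by auto
  qed
  have notN: "tau x i \<notin> \<rat>" if "x \<notin> N" "i \<in> Basis" for x i
  proof
    assume q: "tau x i \<in> \<rat>"
    have "b i - a i \<noteq> 0" using ab that(2) by force
    then have "u i \<bullet> x = a i + tau x i * (b i - a i)" by (simp add: tau_def inner_commute)
    then have "x \<in> N" unfolding N_def using q that(2) by blast
    then show False using that(1) by simp
  qed
  have fm: "(indicator E :: 'a \<Rightarrow> real) \<in> borel_measurable lebesgue" using E by simp
  have bnd: "\<exists>C. AE x in lebesgue. \<bar>(indicator E x :: real)\<bar> \<le> C"
    by (intro exI[of _ 1]) (auto simp: indicator_def)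
  have AE: "AE x in lebesgue. \<forall>e>0. \<exists>d>0. \<forall>R\<in>B. x \<in> R \<and> diameter R < d \<longrightarrow>
      \<bar>(\<integral>y. indicator R y * (indicator E y :: real) \<partial>lebesgue) / measure lebesgue R - indicator E x\<bar> < e"
    using db fm bnd unfolding density_basis_def by blast
  have AE2: "AE x in lebesgue. x \<in> E \<inter> ?R \<longrightarrow> x \<in> (\<Union>k. E \<inter> S k (\<lambda>_. 0) 1)"
    using AE AE_not_in[OF Nnull]
  proof eventually_elim
    case (elim x)
    show ?case
    proof
      assume x: "x \<in> E \<inter> ?R"
      obtain d where d: "d > 0" "\<forall>R\<in>B. x \<in> R \<and> diameter R < d \<longrightarrow>
        \<bar>(\<integral>y. indicator R y * (indicator E y :: real) \<partial>lebesgue) / measure lebesgue R - indicator E x\<bar> < \<delta>"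
        using elim(1) \<delta> by blast
      obtain k :: nat where k: "diameter ?R / d < 2 ^ k" using real_arch_pow[of 2] by auto
      obtain q r where qr: "(q, r) \<in> desc k (\<lambda>_. 0) 1" "x \<in> Box q r"
        using cover[of x "\<lambda>_. 0" 1 k] x notN[OF elim(2)] by auto
      have r: "r = 1 / 2 ^ k" using desc_prop[OF qr(1)] by simp
      have rpos: "r > 0" using r by simp
      have "diameter (Box q r) \<le> r * diameter ?R" by (rule diam_Box[OF rpos])
      also have "\<dots> < d"
      proof -
        have D: "diameter ?R < d * 2 ^ k" using k d(1) by (simp add: divide_less_eq mult.commute)
        show ?thesis unfolding r using D by (simp add: field_simps)
      qed
      finally have dm: "diameter (Box q r) < d" .
      have int: "(\<integral>y. indicator (Box q r) y * (indicator E y :: real) \<partial>lebesgue) = measure lebesgue (Box q r \<inter> E)"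
        by (simp add: indicator_inter_arith[symmetric])
      have "\<bar>measure lebesgue (Box q r \<inter> E) / measure lebesgue (Box q r) - 1\<bar> < \<delta>"
        using d(2) Box_in_B[OF rpos] qr(2) dm x int by force
      moreover have mpos: "measure lebesgue (Box q r) > 0" using measure_Box[OF rpos] mR_pos rpos by simp
      ultimately have "1 - \<delta> < measure lebesgue (E \<inter> Box q r) / measure lebesgue (Box q r)"
        by (simp add: abs_less_iff Int_commute)
      then have "(1 - \<delta>) * measure lebesgue (Box q r) < measure lebesgue (E \<inter> Box q r)"
        using mpos by (simp add: pos_less_divide_eq)
      then have "dg q r" unfolding dg_def .
      then have "x \<in> S k (\<lambda>_. 0) 1" using desc_S[OF qr(1) _ qr(2) _ nd] by simp
      then show "x \<in> (\<Union>k. E \<inter> S k (\<lambda>_. 0) 1)" using x by blast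
    qed
  qed
  define U where "U = (\<Union>k. E \<inter> S k (\<lambda>_. 0) 1)"
  have Ssets: "E \<inter> S k (\<lambda>_. 0) 1 \<in> sets lebesgue" for k using S_sets[of 1] E by (meson sets.Int zero_less_one)
  have Usets: "U \<in> sets lebesgue" unfolding U_def using Ssets by (intro sets.countable_UN) auto
  have Usub: "U \<subseteq> ?R" unfolding U_def using S_sub[of 1] by auto
  have Uf: "U \<in> fmeasurable lebesgue" using fmeasurableI2[OF Box_fmeas[of 1] Usub] Usets by simp
  have ERf: "E \<inter> ?R \<in> fmeasurable lebesgue"
    using fmeasurable_Int_fmeasurable[OF Box_fmeas[of 1] E] by (simp add: Int_commute)
  have "emeasure lebesgue (E \<inter> ?R) \<le> emeasure lebesgue U"
    unfolding U_def using emeasure_mono_AE[OF AE2] Usets unfolding U_def by blast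
  then have le1: "measure lebesgue (E \<inter> ?R) \<le> measure lebesgue U"
    using ERf Uf by (simp add: emeasure_eq_measure2 ennreal_le_iff)
  have inc: "incseq (\<lambda>k. E \<inter> S k (\<lambda>_. 0) 1)"
    using S_incseq[of "\<lambda>_. 0" 1] unfolding incseq_def by blast
  have lim: "(\<lambda>k. measure lebesgue (E \<inter> S k (\<lambda>_. 0) 1)) \<longlonglongrightarrow> measure lebesgue U"
    unfolding U_def by (rule Lim_measure_incseq) (use Ssets inc fmeasurableD2[OF Uf] in \<open>auto simp: U_def\<close>)
  have lim2: "(\<lambda>k. (1 + ?c) * measure lebesgue (E \<inter> S k (\<lambda>_. 0) 1)) \<longlonglongrightarrow> (1 + ?c) * measure lebesgue U"
    by (intro tendsto_mult_left lim)
  have "(1 + ?c) * measure lebesgue U \<le> measure lebesgue (H \<inter> ?R)"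
    by (rule LIMSEQ_le_const2[OF lim2]) (use stopping[of 1 "\<lambda>_. 0" k for k] nd in auto)
  moreover have "(1 + ?c) * measure lebesgue (E \<inter> ?R) \<le> (1 + ?c) * measure lebesgue U"
    using le1 \<delta> by (intro mult_left_mono) auto
  ultimately show ?thesis by linarith
qed

end



lemma incl:
  fixes B :: "'a::euclidean_space set set"
  assumes isb: "is_basis B" and rect: "\<forall>R\<in>B. rect_parallelepiped R"
    and hom: "homothecy_invariant B" and db: "density_basis B"
    and E: "E \<in> sets lebesgue" and \<alpha>: "0 < \<alpha>" and \<delta>: "0 < \<delta>" "\<delta> < 1 - \<alpha>"
  shows "halo B \<alpha> E \<subseteq> halo B (\<alpha> * (1 + \<delta> / 2 ^ DIM('a))) (halo B (1 - \<delta>) E)"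
proof
  let ?c = "\<delta> / 2 ^ DIM('a)"
  let ?H = "halo B (1 - \<delta>) E"
  have c0: "0 \<le> ?c" using \<delta> by simp
  have "?c \<le> \<delta> / 1"
    by (rule divide_left_mono) (use \<delta> in auto)
  then have c: "0 \<le> ?c" "?c \<le> \<delta>" using c0 by auto
  have a1: "\<alpha> * (1 + ?c) < 1"
  proof -
    have "\<alpha> * (1 + ?c) \<le> \<alpha> * (1 + \<delta>)" using c \<alpha> by (intro mult_left_mono) auto
    also have "\<dots> < 1"
    proof -
      have "\<alpha> * \<delta> < 1 * \<delta>" using \<alpha> \<delta> by (intro mult_strict_right_mono) auto
      moreover have "\<alpha> * (1 + \<delta>) = \<alpha> + \<alpha> * \<delta>" by (simp add: algebra_simps)
      ultimately show ?thesis using \<delta> by linarith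
    qed
    finally show ?thesis .
  qed
  have "0 \<le> 1 - \<delta>" using \<delta> \<alpha> by linarith
  then have Hs: "?H \<in> sets lebesgue" using halo_sets[OF isb E] by blast
  fix x assume "x \<in> halo B \<alpha> E"
  then obtain R where R: "R \<in> B" "x \<in> R" "\<alpha> * measure lebesgue R < measure lebesgue (E \<inter> R)"
    using halo_iff[OF isb E] \<alpha> by auto
  have "rect_parallelepiped R" using rect R(1) by blast
  then obtain u :: "'a \<Rightarrow> 'a" and a b where uab0: "(\<forall>i\<in>Basis. \<forall>j\<in>Basis. u i \<bullet> u j = (if i = j then 1 else 0))
      \<and> (\<forall>i\<in>Basis. a i < (b i :: real)) \<and> R = {x. \<forall>i\<in>Basis. a i < x \<bullet> u i \<and> x \<bullet> u i < b i}"
    unfolding rect_parallelepiped_def by (elim exE) blast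
  note uab = conjunct1[OF uab0] conjunct1[OF conjunct2[OF uab0]] conjunct2[OF conjunct2[OF uab0]]
  have d1: "\<delta> < 1" using \<delta> \<alpha> by linarith
  have RB: "{x. \<forall>i\<in>Basis. a i < x \<bullet> u i \<and> x \<bullet> u i < b i} \<in> B" using R(1) uab(3) by simp
  interpret I: hctx B u a b E \<delta>
    by unfold_locales (rule uab(1), rule uab(2), rule isb, rule hom, rule RB, rule E, rule \<delta>(1), rule d1)
  have Req: "R = I.Box (\<lambda>_. 0) 1" using I.R_eq uab(3) by simp
  have mpos: "measure lebesgue R > 0" using I.mR_pos Req by simp
  have "\<alpha> * (1 + ?c) * measure lebesgue R < measure lebesgue (?H \<inter> R)"
  proof (cases "I.dg (\<lambda>_. 0) 1")
    case True
    then have "R \<subseteq> ?H" using I.Box_sub_H[of 1] Req by simp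
    then have "?H \<inter> R = R" by auto
    then show ?thesis using a1 mpos by simp
  next
    case False
    have "\<alpha> * (1 + ?c) * measure lebesgue R = (1 + ?c) * (\<alpha> * measure lebesgue R)" by simp
    also have "\<dots> < (1 + ?c) * measure lebesgue (E \<inter> R)" using R(3) c by simp
    also have "\<dots> \<le> measure lebesgue (?H \<inter> R)" using I.key[OF db False] Req by simp
    finally show ?thesis .
  qed
  then show "x \<in> halo B (\<alpha> * (1 + ?c)) ?H"
    using halo_iff[OF isb Hs, of "\<alpha> * (1 + ?c)"] R(1,2) \<alpha> c by auto
qed




lemma ennreal_div_le_mult:
  fixes a h C :: ennreal
  assumes "a / h \<le> C" "h \<noteq> 0" "h \<noteq> \<infinity>"
  shows "a \<le> C * h"
proof -
  have "a = (a / h) * h" using assms(2,3) by (simp add: ennreal_divide_times less_top)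
  also have "\<dots> \<le> C * h" using assms(1) by (rule mult_right_mono) simp
  finally show ?thesis .
qed

lemma halo_null:
  assumes isb: "is_basis B" and Hs: "H \<in> sets lebesgue" and H0: "emeasure lebesgue H = 0" and b: "\<beta> \<ge> 0"
  shows "halo B \<beta> H = {}"
proof -
  have "\<not> (\<beta> * measure lebesgue R < measure lebesgue (H \<inter> R))" if "R \<in> B" for R
  proof -
    have "measure lebesgue (H \<inter> R) = 0"
      using H0 Hs by (metis Int_lower1 emeasure_eq_0 measure_eq_emeasure_eq_ennreal order_refl
            basis_sets[OF isb that] sets.Int ennreal_0 emeasure_mono le_zero_eq)
    then show ?thesis using b by (simp add: not_less)
  qed
  then show ?thesis using halo_iff[OF isb Hs b] by blast
qed

lemma basis_pos:
  fixes B :: "'a::euclidean_space set set"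
  assumes isb: "is_basis B" and rect: "\<forall>R\<in>B. rect_parallelepiped R"
    and hom: "homothecy_invariant B" and R: "R \<in> B"
  shows "measure lebesgue R > 0"
proof -
  have "rect_parallelepiped R" using rect R by blast
  then obtain u :: "'a \<Rightarrow> 'a" and a b where uab0: "(\<forall>i\<in>Basis. \<forall>j\<in>Basis. u i \<bullet> u j = (if i = j then 1 else 0))
      \<and> (\<forall>i\<in>Basis. a i < (b i :: real)) \<and> R = {x. \<forall>i\<in>Basis. a i < x \<bullet> u i \<and> x \<bullet> u i < b i}"
    unfolding rect_parallelepiped_def by (elim exE) blast
  note uab = conjunct1[OF uab0] conjunct1[OF conjunct2[OF uab0]] conjunct2[OF conjunct2[OF uab0]]
  have RB: "{x. \<forall>i\<in>Basis. a i < x \<bullet> u i \<and> x \<bullet> u i < b i} \<in> B" using R uab(3) by simp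
  interpret I: bctx B u a b
    by unfold_locales (rule uab(1), rule uab(2), rule isb, rule hom, rule RB)
  show ?thesis using I.mR_pos I.R_eq uab(3) by simp
qed

theorem corollary1:
  fixes \<B> :: "'a::euclidean_space set set" and \<alpha> \<delta> :: real
  assumes "is_basis \<B>"
    and "\<forall>R\<in>\<B>. rect_parallelepiped R"
    and "homothecy_invariant \<B>"
    and "density_basis \<B>"
    and "0 < \<alpha>" "\<alpha> < 1"
    and "0 < \<delta>" "\<delta> < 1 - \<alpha>"
  shows "tauberian_const \<B> \<alpha>
           \<le> tauberian_const \<B> (\<alpha> * (1 + \<delta> / 2 ^ DIM('a))) * tauberian_const \<B> (1 - \<delta>)"
proof -
  note isb = assms(1) and rect = assms(2) and hom = assms(3) and db = assms(4)
  let ?a = "\<alpha> * (1 + \<delta> / 2 ^ DIM('a))"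
  let ?C = "tauberian_const \<B>"
  define I :: "'a set set" where "I = {E\<in>sets lebesgue. 0 < emeasure lebesgue E \<and> emeasure lebesgue E < \<infinity>}"
  have C_def': "?C \<beta> = (SUP E\<in>I. emeasure lebesgue (halo \<B> \<beta> E) / emeasure lebesgue E)" for \<beta>
    unfolding tauberian_const_def I_def by simp
  have Cup: "emeasure lebesgue (halo \<B> \<beta> F) / emeasure lebesgue F \<le> ?C \<beta>" if "F \<in> I" for F \<beta>
    unfolding C_def' using that by (rule SUP_upper)
  have a0: "0 \<le> ?a" using assms(5,7) by simp
  have a1: "?a < 1"
  proof -
    have "\<delta> / 2 ^ DIM('a) \<le> \<delta> / 1" by (rule divide_left_mono) (use assms(7) in auto)
    then have "?a \<le> \<alpha> * (1 + \<delta>)" using assms(5) by (intro mult_left_mono) auto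
    moreover have "\<alpha> * \<delta> < 1 * \<delta>" using assms(5,6,7) by (intro mult_strict_right_mono) auto
    moreover have "\<alpha> * (1 + \<delta>) = \<alpha> + \<alpha> * \<delta>" by (simp add: algebra_simps)
    ultimately show ?thesis using assms(8) by linarith
  qed
  have d0: "0 \<le> 1 - \<delta>" using assms(5,8) by linarith
  show ?thesis
    unfolding C_def'[of \<alpha>]
  proof (rule SUP_least)
    fix E assume EI: "E \<in> I"
    then have E: "E \<in> sets lebesgue" "0 < emeasure lebesgue E" "emeasure lebesgue E < \<infinity>"
      unfolding I_def by auto
    show "emeasure lebesgue (halo \<B> \<alpha> E) / emeasure lebesgue E \<le> ?C ?a * ?C (1 - \<delta>)"
    proof (cases "\<B> = {}")
      case True
      then have "halo \<B> \<alpha> E = {}" using halo_iff[OF isb E(1)] assms(5) by auto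
      then show ?thesis by simp
    next
      case False
      then obtain R0 where R0: "R0 \<in> \<B>" by blast
      have R0s: "R0 \<in> sets lebesgue" using basis_sets[OF isb R0] .
      have R0pos: "measure lebesgue R0 > 0" using basis_pos[OF isb rect hom R0] .
      have R0fin: "emeasure lebesgue R0 \<noteq> \<infinity>" using basis_fin[OF isb R0] .
      have R0e: "emeasure lebesgue R0 = ennreal (measure lebesgue R0)"
        using R0fin by (simp add: emeasure_eq_ennreal_measure)
      have R0I: "R0 \<in> I" unfolding I_def using R0s R0pos R0e by (simp add: less_top[symmetric])
      have "?a * measure lebesgue R0 < 1 * measure lebesgue R0"
        using a1 R0pos by (intro mult_strict_right_mono) auto
      then have "?a * measure lebesgue R0 < measure lebesgue (R0 \<inter> R0)" by simp
      then have "R0 \<subseteq> halo \<B> ?a R0"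
        using halo_iff[OF isb R0s a0] R0 by blast
      then have "emeasure lebesgue R0 \<le> emeasure lebesgue (halo \<B> ?a R0)"
        by (intro emeasure_mono) (use halo_sets[OF isb R0s a0] in auto)
      then have "emeasure lebesgue R0 / emeasure lebesgue R0 \<le> emeasure lebesgue (halo \<B> ?a R0) / emeasure lebesgue R0"
        by (rule divide_right_mono_ennreal)
      moreover have "emeasure lebesgue R0 / emeasure lebesgue R0 = 1"
        using R0e R0pos R0fin by (simp add: less_top)
      ultimately have "1 \<le> ?C ?a" using Cup[OF R0I, of ?a] by simp
      then have Cpos: "?C ?a \<noteq> 0" by auto
      define H where "H = halo \<B> (1 - \<delta>) E"
      have Hs: "H \<in> sets lebesgue" unfolding H_def using halo_sets[OF isb E(1) d0] .
      have incl': "halo \<B> \<alpha> E \<subseteq> halo \<B> ?a H"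
        unfolding H_def by (rule incl[OF isb rect hom db E(1) assms(5,7,8)])
      have m1: "emeasure lebesgue (halo \<B> \<alpha> E) \<le> emeasure lebesgue (halo \<B> ?a H)"
        by (rule emeasure_mono[OF incl' halo_sets[OF isb Hs a0]])
      consider "emeasure lebesgue H = 0" | "emeasure lebesgue H = \<infinity>" | "H \<in> I"
      proof -
        have "emeasure lebesgue H = 0 \<or> emeasure lebesgue H = \<infinity> \<or> H \<in> I"
          unfolding I_def mem_Collect_eq using Hs
          by (simp del: emeasure_completion add: zero_less_iff_neq_zero less_top[symmetric]) blast
        then show "(emeasure lebesgue H = 0 \<Longrightarrow> thesis) \<Longrightarrow> (emeasure lebesgue H = \<infinity> \<Longrightarrow> thesis)
           \<Longrightarrow> (H \<in> I \<Longrightarrow> thesis) \<Longrightarrow> thesis" by blast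
      qed
      then show ?thesis
      proof cases
        case 1
        then have "halo \<B> ?a H = {}" using halo_null[OF isb Hs _ a0] by simp
        then have "emeasure lebesgue (halo \<B> \<alpha> E) = 0" using m1 by simp
        then show ?thesis by simp
      next
        case 2
        have "emeasure lebesgue H / emeasure lebesgue E = \<infinity>"
          using 2 E(3) by (simp add: ennreal_top_divide)
        then have "?C (1 - \<delta>) = \<infinity>" using Cup[OF EI, of "1 - \<delta>"] unfolding H_def by (simp add: top_unique)
        then have "?C ?a * ?C (1 - \<delta>) = \<infinity>" using Cpos by (simp add: ennreal_mult_top)
        then show ?thesis by simp
      next
        case 3
        have h0: "emeasure lebesgue H \<noteq> 0" "emeasure lebesgue H \<noteq> \<infinity>" using 3 unfolding I_def by auto
        have "emeasure lebesgue (halo \<B> ?a H) \<le> ?C ?a * emeasure lebesgue H"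
          by (rule ennreal_div_le_mult[OF Cup[OF 3] h0])
        moreover have "emeasure lebesgue H \<le> ?C (1 - \<delta>) * emeasure lebesgue E"
          by (rule ennreal_div_le_mult[OF Cup[OF EI, of "1 - \<delta>", folded H_def]]) (use E in auto)
        ultimately have "emeasure lebesgue (halo \<B> \<alpha> E) \<le> ?C ?a * (?C (1 - \<delta>) * emeasure lebesgue E)"
          using m1 by (meson mult_left_mono order_trans zero_le)
        then have "emeasure lebesgue (halo \<B> \<alpha> E) \<le> emeasure lebesgue E * (?C ?a * ?C (1 - \<delta>))"
          by (simp add: ac_simps)
        then show ?thesis by (rule divide_le_posI_ennreal[OF E(2)])
      qed
    qed
  qed
qed



end
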